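(* Let $d\in\mathbb N$, let $\mathcal S=\{s_i\}_{i=1}^{2^d}\subset[1,4]$ be strictly increasing and $\mathcal A=\{\alpha_j\}_{j=1}^d\subset\mathbb R$ be strictly increasing. Set $\|\mathcal S\|:=\min_{1\le i<j\le 2^d}|s_j-s_i|$ and $\Pi_j\mathcal A:=\prod_{i=1,i\ne j}^d|\alpha_j-\alpha_i|$ (with $\Pi_1\mathcal A=1$ if $d=1$). Suppose $A>0$ and real numbers $a_1,\dots,a_d$ satisfy $\big|\sum_{j=1}^d a_j s^{\alpha_j}\big|\le A$ for every $s\in\mathcal S$. Then for every $1\le j\le d$, $$|a_j|\le\frac{4^{d\left((\alpha_d-\alpha_1)+\max_{1\le i\le d}|\alpha_i|+2\right)}\,A}{\|\mathcal S\|^{d-1}\,\Pi_j\mathcal A}.$$ *)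

theory Defs
  imports "HOL-Analysis.Analysis"
begin

definition set_gap :: "(nat \<Rightarrow> real) \<Rightarrow> nat \<Rightarrow> real" where
  "set_gap s d = Min {\<bar>s j - s i\<bar> | i j. 1 \<le> i \<and> i < j \<and> j \<le> 2 ^ d}"

definition Pi_A :: "(nat \<Rightarrow> real) \<Rightarrow> nat \<Rightarrow> nat \<Rightarrow> real" where
  "Pi_A \<alpha> d j = (\<Prod>i\<in>{1..d} - {j}. \<bar>\<alpha> j - \<alpha> i\<bar>)"

end

theory Submission imports Defs begin

lemma pow_bound:
  fixes x c R :: real
  assumes "1 \<le> x" "x \<le> 4" "\<bar>c\<bar> \<le> R"
  shows "x powr c \<le> 4 powr R"
proof -
  have "x powr c \<le> x powr \<bar>c\<bar>" by (rule powr_mono) (use assms in auto)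
  also have "\<dots> \<le> 4 powr \<bar>c\<bar>" by (rule powr_mono2) (use assms in auto)
  also have "\<dots> \<le> 4 powr R" by (rule powr_mono) (use assms in auto)
  finally show ?thesis .
qed

lemma deriv_sum_powr:
  fixes x :: real
  assumes "x > 0"
  shows "((\<lambda>x. \<Sum>i\<in>J. b i * x powr (e i)) has_real_derivative
           (\<Sum>i\<in>J. b i * (e i * x powr (e i - 1)))) (at x)"
  by (rule DERIV_sum, rule DERIV_cmult, rule has_real_derivative_powr[OF assms])

lemma gen:
  fixes n :: nat
  shows "\<And>J t b \<beta> B R D g j. finite J \<Longrightarrow> card J = n \<Longrightarrow> inj_on \<beta> J \<Longrightarrow> g > 0
   \<Longrightarrow> (\<forall>k. Suc k < 2^n \<longrightarrow> t k + g \<le> t (Suc k))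
   \<Longrightarrow> (\<forall>k<2^n. 1 \<le> t k \<and> t k \<le> 4)
   \<Longrightarrow> (\<forall>i\<in>J. \<bar>\<beta> i\<bar> \<le> R) \<Longrightarrow> (\<forall>i\<in>J. \<forall>i'\<in>J. \<bar>\<beta> i - \<beta> i'\<bar> \<le> D)
   \<Longrightarrow> (\<forall>k<2^n. \<bar>\<Sum>i\<in>J. b i * t k powr \<beta> i\<bar> \<le> B)
   \<Longrightarrow> j \<in> J
   \<Longrightarrow> \<bar>b j\<bar> * (\<Prod>i\<in>J-{j}. \<bar>\<beta> j - \<beta> i\<bar>) \<le> B * (2/g)^(n-1) * 4 powr (R + real (n-1)*(D+1))"
proof (induction n)
  case 0
  then show ?case by auto
next
  case (Suc n)
  have B0: "0 \<le> B" using Suc.prems(9)[rule_format, of 0] by (meson abs_ge_zero order_trans zero_less_power zero_less_numeral)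
  show ?case
  proof (cases "n = 0")
    case True
    have "card J = 1" using Suc.prems(2) True by simp
    then obtain z where "J = {z}" by (rule card_1_singletonE)
    hence J: "J = {j}" using Suc.prems(10) by simp
    have t0: "1 \<le> t 0" "t 0 \<le> 4" using Suc.prems(6) True by auto
    have "\<bar>b j * t 0 powr \<beta> j\<bar> \<le> B" using Suc.prems(9) J True by auto
    hence h1: "\<bar>b j\<bar> * t 0 powr \<beta> j \<le> B" using t0 by (simp add: abs_mult)
    have h2: "t 0 powr (- \<beta> j) \<le> 4 powr R"
      by (rule pow_bound) (use t0 Suc.prems(7) J in auto)
    have "\<bar>b j\<bar> = (\<bar>b j\<bar> * t 0 powr \<beta> j) * t 0 powr (- \<beta> j)"
      using t0 by (simp add: powr_minus field_simps)
    also have "\<dots> \<le> B * 4 powr R"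
      by (rule mult_mono) (use h1 h2 B0 in auto)
    finally show ?thesis using J True by simp
  next
    case False
    have "card (J - {j}) = n" using Suc.prems by simp
    hence "J - {j} \<noteq> {}" using False by (metis card.empty)
    then obtain r where r: "r \<in> J" "r \<noteq> j" by blast
    define h where "h = (\<lambda>x::real. \<Sum>i\<in>J. b i * x powr (\<beta> i - \<beta> r))"
    define h' where "h' = (\<lambda>x::real. \<Sum>i\<in>J. b i * ((\<beta> i - \<beta> r) * x powr (\<beta> i - \<beta> r - 1)))"
    have tpos: "\<And>k. k < 2^Suc n \<Longrightarrow> t k \<ge> 1" using Suc.prems(6) by auto
    have hb: "\<bar>h (t k)\<bar> \<le> B * 4 powr R" if "k < 2^Suc n" for k
    proof -
      have t: "1 \<le> t k" "t k \<le> 4" using Suc.prems(6) that by auto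
      have "h (t k) = t k powr (- \<beta> r) * (\<Sum>i\<in>J. b i * t k powr \<beta> i)"
        unfolding h_def sum_distrib_left
        by (rule sum.cong[OF refl]) (simp add: powr_diff powr_minus divide_inverse mult_ac)
      hence "\<bar>h (t k)\<bar> = t k powr (- \<beta> r) * \<bar>\<Sum>i\<in>J. b i * t k powr \<beta> i\<bar>"
        by (simp add: abs_mult)
      also have "\<dots> \<le> 4 powr R * B"
      proof (rule mult_mono)
        show "t k powr (- \<beta> r) \<le> 4 powr R"
          by (rule pow_bound[OF t]) (use Suc.prems(7) r in auto)
        show "\<bar>\<Sum>i\<in>J. b i * t k powr \<beta> i\<bar> \<le> B" using Suc.prems(9) that by blast
      qed auto
      finally show ?thesis by (simp add: mult.commute)
    qed
    have "\<forall>k. \<exists>x. k < 2^n \<longrightarrow> (t (2*k) < x \<and> x < t (2*k+1) \<and>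
             h (t (2*k+1)) - h (t (2*k)) = (t (2*k+1) - t (2*k)) * h' x)"
    proof
      fix k :: nat
      show "\<exists>x. k < 2^n \<longrightarrow> (t (2*k) < x \<and> x < t (2*k+1) \<and>
             h (t (2*k+1)) - h (t (2*k)) = (t (2*k+1) - t (2*k)) * h' x)"
      proof (cases "k < 2^n")
        case True
        have k1: "Suc (2*k) < 2^Suc n" using True by simp
        have lt: "t (2*k) < t (2*k+1)" using Suc.prems(4,5) k1 by force
        have t1: "1 \<le> t (2*k)" using Suc.prems(6) k1 by auto
        have "\<exists>z. t (2*k) < z \<and> z < t (2*k+1) \<and> h (t (2*k+1)) - h (t (2*k)) = (t (2*k+1) - t (2*k)) * h' z"
        proof (rule MVT2[OF lt])
          fix x assume "t (2*k) \<le> x" "x \<le> t (2*k+1)"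
          hence "x > 0" using t1 by linarith
          thus "(h has_real_derivative h' x) (at x)"
            unfolding h_def h'_def by (rule deriv_sum_powr)
        qed
        thus ?thesis by blast
      qed auto
    qed
    then obtain \<xi> where xi: "\<And>k. k < 2^n \<Longrightarrow> t (2*k) < \<xi> k \<and> \<xi> k < t (2*k+1) \<and>
             h (t (2*k+1)) - h (t (2*k)) = (t (2*k+1) - t (2*k)) * h' (\<xi> k)"
      by metis
    define b' where "b' = (\<lambda>i. b i * (\<beta> i - \<beta> r))"
    define \<beta>' where "\<beta>' = (\<lambda>i. \<beta> i - \<beta> r - 1)"
    define B' where "B' = 2 * B * 4 powr R / g"
    have gapx: "\<forall>k. Suc k < 2^n \<longrightarrow> \<xi> k + g \<le> \<xi> (Suc k)"
    proof (intro allI impI)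
      fix k :: nat assume k: "Suc k < 2^n"
      have "Suc (2*k+1) < 2^Suc n" using k by simp
      hence "t (2*k+1) + g \<le> t (2*k+2)" using Suc.prems(5) by force
      moreover have "\<xi> k < t (2*k+1)" using xi[of k] k by simp
      moreover have "t (2*(Suc k)) < \<xi> (Suc k)" using xi[of "Suc k"] k by simp
      ultimately show "\<xi> k + g \<le> \<xi> (Suc k)" by simp
    qed
    have rngx: "\<forall>k<2^n. 1 \<le> \<xi> k \<and> \<xi> k \<le> 4"
    proof (intro allI impI)
      fix k :: nat assume k: "k < 2^n"
      have "2*k+1 < 2^Suc n" using k by simp
      hence "1 \<le> t (2*k)" "t (2*k+1) \<le> 4" using Suc.prems(6) by auto
      thus "1 \<le> \<xi> k \<and> \<xi> k \<le> 4" using xi[OF k] by linarith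
    qed
    have valx: "\<forall>k<2^n. \<bar>\<Sum>i\<in>J-{r}. b' i * \<xi> k powr \<beta>' i\<bar> \<le> B'"
    proof (intro allI impI)
      fix k :: nat assume k: "k < 2^n"
      have k1: "2*k+1 < 2^Suc n" using k by simp
      have "h' (\<xi> k) = (\<Sum>i\<in>J. b' i * \<xi> k powr \<beta>' i)"
        unfolding h'_def b'_def \<beta>'_def by (simp add: mult.assoc)
      also have "\<dots> = (\<Sum>i\<in>J-{r}. b' i * \<xi> k powr \<beta>' i)"
        using Suc.prems(1) r by (subst sum.remove[of J r]) (auto simp: b'_def)
      finally have e: "h' (\<xi> k) = (\<Sum>i\<in>J-{r}. b' i * \<xi> k powr \<beta>' i)" .
      have dl: "t (2*k) + g \<le> t (2*k+1)" using Suc.prems(5) k1 by force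
      have "\<bar>h (t (2*k+1)) - h (t (2*k))\<bar> \<le> 2 * (B * 4 powr R)"
        using hb[of "2*k+1"] hb[of "2*k"] k1 by linarith
      hence "(t (2*k+1) - t (2*k)) * \<bar>h' (\<xi> k)\<bar> \<le> 2 * B * 4 powr R"
        using xi[OF k] dl Suc.prems(4) by (simp add: abs_mult)
      moreover have "g * \<bar>h' (\<xi> k)\<bar> \<le> (t (2*k+1) - t (2*k)) * \<bar>h' (\<xi> k)\<bar>"
        using dl by (intro mult_right_mono) auto
      ultimately have "g * \<bar>h' (\<xi> k)\<bar> \<le> 2 * B * 4 powr R" by linarith
      hence "\<bar>h' (\<xi> k)\<bar> \<le> B'" unfolding B'_def using Suc.prems(4)
        by (simp add: pos_le_divide_eq mult.commute)
      thus "\<bar>\<Sum>i\<in>J-{r}. b' i * \<xi> k powr \<beta>' i\<bar> \<le> B'" using e by simp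
    qed
    have IH: "\<bar>b' j\<bar> * (\<Prod>i\<in>J-{r}-{j}. \<bar>\<beta>' j - \<beta>' i\<bar>)
       \<le> B' * (2/g)^(n-1) * 4 powr ((D+1) + real (n-1)*(D+1))"
    proof (rule Suc.IH)
      show "finite (J-{r})" using Suc.prems(1) by simp
      show "card (J-{r}) = n" using Suc.prems(1,2) r by simp
      show "inj_on \<beta>' (J-{r})" using Suc.prems(3) unfolding \<beta>'_def inj_on_def by auto
      show "0 < g" by (rule Suc.prems(4))
      show "\<forall>k. Suc k < 2^n \<longrightarrow> \<xi> k + g \<le> \<xi> (Suc k)" by (rule gapx)
      show "\<forall>k<2^n. 1 \<le> \<xi> k \<and> \<xi> k \<le> 4" by (rule rngx)
      show "\<forall>i\<in>J-{r}. \<bar>\<beta>' i\<bar> \<le> D+1"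
      proof
        fix i assume "i \<in> J-{r}"
        hence "\<bar>\<beta> i - \<beta> r\<bar> \<le> D" using Suc.prems(8) r by auto
        thus "\<bar>\<beta>' i\<bar> \<le> D+1" unfolding \<beta>'_def by linarith
      qed
      show "\<forall>i\<in>J-{r}. \<forall>i'\<in>J-{r}. \<bar>\<beta>' i - \<beta>' i'\<bar> \<le> D"
        using Suc.prems(8) unfolding \<beta>'_def by auto
      show "\<forall>k<2^n. \<bar>\<Sum>i\<in>J-{r}. b' i * \<xi> k powr \<beta>' i\<bar> \<le> B'" by (rule valx)
      show "j \<in> J-{r}" using Suc.prems(10) r by auto
    qed
    have L: "\<bar>b' j\<bar> * (\<Prod>i\<in>J-{r}-{j}. \<bar>\<beta>' j - \<beta>' i\<bar>) = \<bar>b j\<bar> * (\<Prod>i\<in>J-{j}. \<bar>\<beta> j - \<beta> i\<bar>)"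
    proof -
      have "(\<Prod>i\<in>J-{j}. \<bar>\<beta> j - \<beta> i\<bar>) = \<bar>\<beta> j - \<beta> r\<bar> * (\<Prod>i\<in>J-{j}-{r}. \<bar>\<beta> j - \<beta> i\<bar>)"
        using Suc.prems(1) r by (subst prod.remove[of "J-{j}" r]) auto
      moreover have "J-{j}-{r} = J-{r}-{j}" by auto
      ultimately show ?thesis unfolding b'_def \<beta>'_def by (simp add: abs_mult)
    qed
    have R: "B' * (2/g)^(n-1) * 4 powr ((D+1) + real (n-1)*(D+1))
           = B * (2/g)^(Suc n - 1) * 4 powr (R + real (Suc n - 1)*(D+1))"
    proof -
      obtain m where m: "n = Suc m" using False by (cases n) auto
      have "B' * (2/g)^(n-1) * 4 powr ((D+1) + real (n-1)*(D+1))
          = B * ((2/g) * (2/g)^m) * (4 powr R * 4 powr ((D+1) + real m*(D+1)))"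
        unfolding B'_def m by simp
      also have "\<dots> = B * (2/g)^(Suc n - 1) * 4 powr (R + real (Suc n - 1)*(D+1))"
        unfolding m by (simp add: powr_add[symmetric] algebra_simps)
      finally show ?thesis .
    qed
    show ?thesis using IH L R by simp
  qed
qed


theorem lemma10p3:
  fixes d :: nat and s \<alpha> a :: "nat \<Rightarrow> real" and A :: real
  assumes "d \<ge> 1"
    and "strict_mono_on {1..2 ^ d} s"
    and "\<forall>i\<in>{1..2 ^ d}. 1 \<le> s i \<and> s i \<le> 4"
    and "strict_mono_on {1..d} \<alpha>"
    and "A > 0"
    and "\<forall>i\<in>{1..2 ^ d}. \<bar>\<Sum>j=1..d. a j * s i powr \<alpha> j\<bar> \<le> A"
    and "j \<in> {1..d}"
  shows "\<bar>a j\<bar> \<le> 4 powr (real d * ((\<alpha> d - \<alpha> 1) + (MAX i\<in>{1..d}. \<bar>\<alpha> i\<bar>) + 2)) * A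
                   / (set_gap s d ^ (d - 1) * Pi_A \<alpha> d j)"
proof -
  define M where "M = (MAX i\<in>{1..d}. \<bar>\<alpha> i\<bar>)"
  define D where "D = \<alpha> d - \<alpha> 1"
  define g where "g = set_gap s d"
  define P where "P = Pi_A \<alpha> d j"
  define S where "S = {\<bar>s j - s i\<bar> | i j. 1 \<le> i \<and> i < j \<and> j \<le> (2::nat) ^ d}"
  have gS: "g = Min S" unfolding g_def set_gap_def S_def by simp
  have fS: "finite S"
  proof -
    have "S \<subseteq> (\<lambda>(i,j). \<bar>s j - s i\<bar>) ` ({1..2^d} \<times> {1..2^d})"
      unfolding S_def by force
    thus ?thesis by (rule finite_subset) auto
  qed
  have d2: "(2::nat) \<le> 2^d" using assms(1)
    by (metis power_one_right power_increasing zero_less_numeral one_le_numeral)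
  have neS: "S \<noteq> {}" unfolding S_def using d2 by force
  have posS: "\<forall>x\<in>S. 0 < x"
  proof
    fix x assume "x \<in> S"
    then obtain i j' where x: "x = \<bar>s j' - s i\<bar>" "1 \<le> i" "i < j'" "j' \<le> (2::nat)^d"
      unfolding S_def by blast
    have "s i < s j'" using strict_mono_onD[OF assms(2), of i j'] x by auto
    thus "0 < x" using x by simp
  qed
  have g0: "g > 0" unfolding gS using fS neS posS by (simp add: Min_gr_iff)
  have gap: "\<forall>k. Suc k < 2^d \<longrightarrow> s (k+1) + g \<le> s (Suc k + 1)"
  proof (intro allI impI)
    fix k :: nat assume k: "Suc k < 2^d"
    have mem: "\<bar>s (k+2) - s (k+1)\<bar> \<in> S" unfolding S_def using k
      by (intro CollectI exI[of _ "k+1"] exI[of _ "k+2"]) auto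
    have "g \<le> \<bar>s (k+2) - s (k+1)\<bar>" unfolding gS using fS mem by simp
    moreover have "s (k+1) < s (k+2)" using strict_mono_onD[OF assms(2), of "k+1" "k+2"] k by auto
    ultimately show "s (k+1) + g \<le> s (Suc k + 1)" by simp
  qed
  have M: "\<forall>i\<in>{1..d}. \<bar>\<alpha> i\<bar> \<le> M" unfolding M_def by (auto intro: Max_ge)
  have M0: "0 \<le> M" using M assms(1) by (meson abs_ge_zero atLeastAtMost_iff order.trans order_refl)
  have rng: "\<And>i. i \<in> {1..d} \<Longrightarrow> \<alpha> 1 \<le> \<alpha> i \<and> \<alpha> i \<le> \<alpha> d"
    using strict_mono_on_leD[OF assms(4)] assms(1) by auto
  have Dd: "\<forall>i\<in>{1..d}. \<forall>i'\<in>{1..d}. \<bar>\<alpha> i - \<alpha> i'\<bar> \<le> D"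
  proof (intro ballI)
    fix i i' assume "i \<in> {1..d}" "i' \<in> {1..d}"
    from rng[OF this(1)] rng[OF this(2)] show "\<bar>\<alpha> i - \<alpha> i'\<bar> \<le> D"
      unfolding D_def by (simp add: abs_le_iff)
  qed
  have D0: "0 \<le> D" using rng[of 1] assms(1) unfolding D_def by auto
  have main: "\<bar>a j\<bar> * (\<Prod>i\<in>{1..d}-{j}. \<bar>\<alpha> j - \<alpha> i\<bar>)
     \<le> A * (2/g)^(d-1) * 4 powr (M + real (d-1)*(D+1))"
  proof (rule gen[where t="\<lambda>k. s (k+1)"])
    show "inj_on \<alpha> {1..d}" by (rule strict_mono_on_imp_inj_on[OF assms(4)])
    show "\<forall>k<2^d. 1 \<le> s (k+1) \<and> s (k+1) \<le> 4" using assms(3) by auto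
    show "\<forall>k<2^d. \<bar>\<Sum>i\<in>{1..d}. a i * s (k+1) powr \<alpha> i\<bar> \<le> A" using assms(6) by auto
  qed (use g0 gap M Dd assms(7) in auto)
  have P0: "P > 0" unfolding P_def Pi_A_def
  proof (rule prod_pos)
    fix i assume i: "i \<in> {1..d} - {j}"
    have "\<alpha> j \<noteq> \<alpha> i"
      using inj_onD[OF strict_mono_on_imp_inj_on[OF assms(4)], of j i] i assms(7) by blast
    thus "0 < \<bar>\<alpha> j - \<alpha> i\<bar>" by simp
  qed
  have "A * (2/g)^(d-1) * 4 powr (M + real (d-1)*(D+1))
      = A / g^(d-1) * (2 powr real (d-1) * 4 powr (M + real (d-1)*(D+1)))"
    by (simp add: power_divide powr_realpow)
  also have "\<dots> \<le> A / g^(d-1) * (4 powr real (d-1) * 4 powr (M + real (d-1)*(D+1)))"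
    using assms(5) g0 by (intro mult_left_mono mult_right_mono powr_mono2) auto
  also have "\<dots> = A / g^(d-1) * 4 powr (real (d-1) + M + real (d-1)*(D+1))"
    by (simp add: powr_add[symmetric] add.assoc)
  also have "\<dots> \<le> A / g^(d-1) * 4 powr (real d * (D + M + 2))"
  proof (intro mult_left_mono powr_mono)
    have "real (d-1) = real d - 1" using assms(1) by simp
    moreover have "real d * M \<ge> M" using assms(1) M0
      by (metis mult_le_cancel_right1 of_nat_1 of_nat_le_iff linorder_not_le)
    ultimately show "real (d-1) + M + real (d-1)*(D+1) \<le> real d * (D + M + 2)"
      using D0 by (simp add: algebra_simps)
  qed (use assms(5) g0 in auto)
  finally have "\<bar>a j\<bar> * P \<le> 4 powr (real d * (D + M + 2)) * A / g^(d-1)"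
    using main unfolding P_def Pi_A_def by (simp add: mult.commute)
  thus ?thesis unfolding P_def[symmetric] g_def[symmetric] M_def[symmetric] D_def[symmetric]
    using P0 g0 by (simp add: pos_le_divide_eq mult.commute mult.left_commute)
qed

end
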